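(* Let $M$ be a matroid of rank $r$ on a finite ground set $E$ with set of bases $\mathcal{B}(M)$, and let $(E_1,E_2)$ be a good partition of $E$ with associated integers $r_1,r_2,a_1,a_2$ (as defined in the context). Define $$\mathcal{B}_1=\{B\in\mathcal{B}(M): |B\cap E_1|\le r_1-a_1\},\qquad \mathcal{B}_2=\{B\in\mathcal{B}(M): |B\cap E_2|\le r_2-a_2\}.$$ Then $\mathcal{B}_1$ and $\mathcal{B}_2$ are each the collection of bases of a matroid on $E$.
   Context: For $A\subseteq E$, $M|_A$ denotes the restriction of $M$ to $A$, whose independent sets are the independent sets of $M$ contained in $A$; $\mathcal{I}(N)$ denotes the family of independent sets of a matroid $N$. A partition $(E_1,E_2)$ of $E$ (so $E=E_1\cup E_2$, $E_1\cap E_2=\emptyset$) with $r_i$ the rank of $M|_{E_i}$ and $r_i>1$ for $i=1,2$ is called a good partition if there exist integers $a_1,a_2$ with $0<a_1<r_1$ and $0<a_2<r_2$ such that (P1) $r_1+r_2=r+a_1+a_2$, and (P2) for every $X\in\mathcal{I}(M|_{E_1})$ with $|X|\le r_1-a_1$ and every $Y\in\mathcal{I}(M|_{E_2})$ with $|Y|\le r_2-a_2$, one has $X\cup Y\in\mathcal{I}(M)$. *)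

theory Defs
  imports Main
begin

definition matroid :: "'a set \<Rightarrow> ('a set \<Rightarrow> bool) \<Rightarrow> bool" where
  "matroid E indep \<longleftrightarrow>
     finite E \<and>
     (\<forall>X. indep X \<longrightarrow> X \<subseteq> E) \<and>
     indep {} \<and>
     (\<forall>X Y. indep X \<and> Y \<subseteq> X \<longrightarrow> indep Y) \<and>
     (\<forall>X Y. indep X \<and> indep Y \<and> card X < card Y \<longrightarrow> (\<exists>y\<in>Y - X. indep (insert y X)))"

definition bases :: "'a set \<Rightarrow> ('a set \<Rightarrow> bool) \<Rightarrow> 'a set set" where
  "bases E indep = {B. B \<subseteq> E \<and> indep B \<and> (\<forall>X. indep X \<and> B \<subseteq> X \<longrightarrow> X = B)}"

definition restr :: "('a set \<Rightarrow> bool) \<Rightarrow> 'a set \<Rightarrow> 'a set \<Rightarrow> bool" where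
  "restr indep A X \<longleftrightarrow> indep X \<and> X \<subseteq> A"

definition rank_of :: "('a set \<Rightarrow> bool) \<Rightarrow> 'a set \<Rightarrow> nat" where
  "rank_of indep A = Max (card ` {X. restr indep A X})"

definition good_partition ::
  "'a set \<Rightarrow> ('a set \<Rightarrow> bool) \<Rightarrow> 'a set \<Rightarrow> 'a set \<Rightarrow> nat \<Rightarrow> nat \<Rightarrow> bool" where
  "good_partition E indep E1 E2 a1 a2 \<longleftrightarrow>
     E1 \<union> E2 = E \<and> E1 \<inter> E2 = {} \<and>
     rank_of indep E1 > 1 \<and> rank_of indep E2 > 1 \<and>
     0 < a1 \<and> a1 < rank_of indep E1 \<and> 0 < a2 \<and> a2 < rank_of indep E2 \<and>
     rank_of indep E1 + rank_of indep E2 = rank_of indep E + a1 + a2 \<and>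
     (\<forall>X Y. restr indep E1 X \<and> card X \<le> rank_of indep E1 - a1 \<and>
            restr indep E2 Y \<and> card Y \<le> rank_of indep E2 - a2 \<longrightarrow> indep (X \<union> Y))"

end

theory Submission
  imports Defs
begin

lemma rank_fin:
  assumes "matroid E indep"
  shows "finite {X. restr indep A X}"
proof -
  have "{X. restr indep A X} \<subseteq> Pow E" using assms by (auto simp: matroid_def restr_def)
  moreover have "finite E" using assms by (simp add: matroid_def)
  ultimately show ?thesis by (meson finite_Pow_iff rev_finite_subset)
qed

lemma rank_ge:
  assumes "matroid E indep" "indep X" "X \<subseteq> A"
  shows "card X \<le> rank_of indep A"
proof -
  have "finite {X. restr indep A X}" using rank_fin[OF assms(1)] .
  hence "finite (card ` {X. restr indep A X})" by simp
  moreover have "card X \<in> card ` {X. restr indep A X}" using assms(2,3) by (auto simp: restr_def)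
  ultimately show ?thesis unfolding rank_of_def by (rule Max_ge)
qed


lemma rank_ex:
  assumes "matroid E indep"
  shows "\<exists>X. indep X \<and> X \<subseteq> A \<and> card X = rank_of indep A"
proof -
  have ne: "{X. restr indep A X} \<noteq> {}" using assms by (auto simp: matroid_def restr_def)
  have "rank_of indep A \<in> card ` {X. restr indep A X}"
    unfolding rank_of_def using rank_fin[OF assms] ne by (intro Max_in) auto
  then show ?thesis by (auto simp: restr_def)
qed

lemma main:
  assumes m: "matroid E indep" and p1: "E1 \<union> E2 = E" and p2: "E1 \<inter> E2 = {}"
    and k: "k1 + k2 = rank_of indep E" "k1 \<le> rank_of indep E1" "k2 \<le> rank_of indep E2"
    and P: "\<forall>X Y. restr indep E1 X \<and> card X \<le> k1 \<and> restr indep E2 Y \<and> card Y \<le> k2 \<longrightarrow> indep (X \<union> Y)"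
  shows "\<exists>indep1. matroid E indep1 \<and> bases E indep1 = {B \<in> bases E indep. card (B \<inter> E1) \<le> k1}"
proof -
  define r where "r = rank_of indep E"
  have finE: "finite E" and sub: "\<And>X. indep X \<Longrightarrow> X \<subseteq> E" and emp: "indep {}"
    and down: "\<And>X Y. indep X \<Longrightarrow> Y \<subseteq> X \<Longrightarrow> indep Y"
    and aug: "\<And>X Y. indep X \<Longrightarrow> indep Y \<Longrightarrow> card X < card Y \<Longrightarrow> \<exists>y\<in>Y - X. indep (insert y X)"
    using m unfolding matroid_def by blast+
  have finI: "\<And>X. indep X \<Longrightarrow> finite X" using sub finE finite_subset by blast
  have cardr: "\<And>X. indep X \<Longrightarrow> card X \<le> r" unfolding r_def using rank_ge[OF m] sub by blast
  define I1 where "I1 = (\<lambda>X. indep X \<and> card (X \<inter> E1) \<le> k1)"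
  have aug1: "\<exists>y\<in>Y - X. I1 (insert y X)" if X: "I1 X" and Y: "I1 Y" and c: "card X < card Y" for X Y
  proof (cases "card (X \<inter> E1) < k1")
    case True
    obtain y where y: "y \<in> Y - X" "indep (insert y X)" using aug X Y c unfolding I1_def by blast
    have "finite X" using X finI unfolding I1_def by blast
    hence "card (insert y X \<inter> E1) \<le> card (X \<inter> E1) + 1"
      by (cases "y \<in> E1") (simp_all add: card_insert_if)
    then show ?thesis using y True unfolding I1_def by (intro bexI[of _ y]) auto
  next
    case False
    hence X1: "card (X \<inter> E1) = k1" using X unfolding I1_def by simp
    have iX: "indep X" and iY: "indep Y" using X Y unfolding I1_def by auto
    have fX: "finite X" and fY: "finite Y" using iX iY finI by auto
    have XE: "X = (X \<inter> E1) \<union> (X \<inter> E2)" and YE: "Y = (Y \<inter> E1) \<union> (Y \<inter> E2)"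
      using sub iX iY p1 by auto
    have cX: "card X = card (X \<inter> E1) + card (X \<inter> E2)"
      using card_Un_disjoint[of "X \<inter> E1" "X \<inter> E2"] fX p2 XE by auto
    have cY: "card Y = card (Y \<inter> E1) + card (Y \<inter> E2)"
      using card_Un_disjoint[of "Y \<inter> E1" "Y \<inter> E2"] fY p2 YE by auto
    have "card (Y \<inter> E1) \<le> k1" using Y unfolding I1_def by simp
    hence lt: "card (X \<inter> E2) < card (Y \<inter> E2)" using cX cY X1 c by linarith
    obtain y where y: "y \<in> (Y \<inter> E2) - (X \<inter> E2)" "indep (insert y (X \<inter> E2))"
      using aug[OF down[OF iX] down[OF iY] lt] by blast
    have "card Y \<le> r" using cardr iY .
    hence cX2: "card (X \<inter> E2) < k2" using cX X1 c k(1) r_def by linarith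
    have "card (insert y (X \<inter> E2)) \<le> k2"
      using cX2 fX by (simp add: card_insert_if)
    have ind: "indep ((X \<inter> E1) \<union> insert y (X \<inter> E2))"
    proof -
      have "restr indep E1 (X \<inter> E1)" using down[OF iX, of "X \<inter> E1"] unfolding restr_def by auto
      moreover have "restr indep E2 (insert y (X \<inter> E2))" using y unfolding restr_def by auto
      ultimately show ?thesis
        using P[rule_format, of "X \<inter> E1" "insert y (X \<inter> E2)"] X1 `card (insert y (X \<inter> E2)) \<le> k2` by simp
    qed
    have eq: "(X \<inter> E1) \<union> insert y (X \<inter> E2) = insert y X" using XE y(1) by auto
    have "y \<notin> X" using y(1) by auto
    moreover have "insert y X \<inter> E1 = X \<inter> E1" using y(1) p2 by auto
    ultimately show ?thesis using ind eq X1 y(1) unfolding I1_def by (intro bexI[of _ y]) auto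
  qed
  have mat: "matroid E I1"
    unfolding matroid_def
  proof (intro conjI allI impI)
    show "finite E" by fact
    show "\<And>X. I1 X \<Longrightarrow> X \<subseteq> E" using sub unfolding I1_def by blast
    show "I1 {}" using emp unfolding I1_def by simp
    show "\<And>X Y. I1 X \<and> Y \<subseteq> X \<Longrightarrow> I1 Y"
    proof -
      fix X Y assume a: "I1 X \<and> Y \<subseteq> X"
      hence "card (Y \<inter> E1) \<le> card (X \<inter> E1)"
        using finI unfolding I1_def by (meson card_mono finite_Int inf_mono order_refl)
      then show "I1 Y" using a down unfolding I1_def by auto
    qed
    show "\<And>X Y. I1 X \<and> I1 Y \<and> card X < card Y \<Longrightarrow> \<exists>y\<in>Y - X. I1 (insert y X)"
      using aug1 by blast
  qed
  obtain A1 where A1: "indep A1" "A1 \<subseteq> E1" "card A1 = rank_of indep E1" using rank_ex[OF m] by blast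
  obtain A2 where A2: "indep A2" "A2 \<subseteq> E2" "card A2 = rank_of indep E2" using rank_ex[OF m] by blast
  obtain Z1 where Z1: "Z1 \<subseteq> A1" "card Z1 = k1" using obtain_subset_with_card_n k(2) A1(3) by metis
  obtain Z2 where Z2: "Z2 \<subseteq> A2" "card Z2 = k2" using obtain_subset_with_card_n k(3) A2(3) by metis
  have r1: "restr indep E1 Z1" using down[OF A1(1) Z1(1)] Z1(1) A1(2) unfolding restr_def by blast
  have r2: "restr indep E2 Z2" using down[OF A2(1) Z2(1)] Z2(1) A2(2) unfolding restr_def by blast
  have iZ: "indep (Z1 \<union> Z2)" using P[rule_format, OF conjI[OF r1 conjI[OF _ conjI[OF r2]]]] Z1(2) Z2(2) by simp
  have fZ1: "finite Z1" using down[OF A1(1) Z1(1)] finI by blast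
  have fZ2: "finite Z2" using down[OF A2(1) Z2(1)] finI by blast
  have dis: "Z1 \<inter> Z2 = {}" using Z1 Z2 A1 A2 p2 by blast
  have cZ: "card (Z1 \<union> Z2) = r" using card_Un_disjoint[OF fZ1 fZ2 dis] Z1 Z2 k(1) r_def by simp
  have "(Z1 \<union> Z2) \<inter> E1 = Z1" using Z1 Z2 A1 A2 p2 by blast
  hence I1Z: "I1 (Z1 \<union> Z2)" using iZ Z1 unfolding I1_def by simp
  have "bases E I1 = {B \<in> bases E indep. card (B \<inter> E1) \<le> k1}"
  proof (intro set_eqI iffI)
    fix B assume "B \<in> bases E I1"
    hence B: "B \<subseteq> E" "I1 B" "\<And>X. I1 X \<Longrightarrow> B \<subseteq> X \<Longrightarrow> X = B" unfolding bases_def by auto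
    have cB: "card B = r"
    proof (rule ccontr)
      assume "card B \<noteq> r"
      hence "card B < card (Z1 \<union> Z2)" using cardr B(2) cZ unfolding I1_def by fastforce
      then obtain y where "y \<in> (Z1 \<union> Z2) - B" "I1 (insert y B)" using aug1 B(2) I1Z by blast
      then show False using B(3)[of "insert y B"] by auto
    qed
    have "B \<in> bases E indep"
      unfolding bases_def
    proof (intro CollectI conjI allI impI)
      show "B \<subseteq> E" "indep B" using B unfolding I1_def by auto
      fix X assume a: "indep X \<and> B \<subseteq> X"
      have "finite X" using a finI by blast
      moreover have "card X \<le> card B" using cardr a cB by auto
      ultimately show "X = B" using a card_subset_eq[of X B] by (metis card_seteq)
    qed
    then show "B \<in> {B \<in> bases E indep. card (B \<inter> E1) \<le> k1}" using B(2) unfolding I1_def by auto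
  next
    fix B assume "B \<in> {B \<in> bases E indep. card (B \<inter> E1) \<le> k1}"
    then show "B \<in> bases E I1" unfolding bases_def I1_def by auto
  qed
  then show ?thesis using mat by blast
qed

theorem lemma1:
  fixes E E1 E2 :: "'a set" and indep :: "'a set \<Rightarrow> bool" and a1 a2 :: nat
  assumes "matroid E indep"
    and "good_partition E indep E1 E2 a1 a2"
  shows "(\<exists>indep1. matroid E indep1 \<and> bases E indep1 =
            {B \<in> bases E indep. card (B \<inter> E1) \<le> rank_of indep E1 - a1})
       \<and> (\<exists>indep2. matroid E indep2 \<and> bases E indep2 =
            {B \<in> bases E indep. card (B \<inter> E2) \<le> rank_of indep E2 - a2})"
proof -
  note g = assms(2)[unfolded good_partition_def]
  have s: "(rank_of indep E1 - a1) + (rank_of indep E2 - a2) = rank_of indep E" using g by linarith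
  show ?thesis
  proof
    show "\<exists>indep1. matroid E indep1 \<and> bases E indep1 =
            {B \<in> bases E indep. card (B \<inter> E1) \<le> rank_of indep E1 - a1}"
      by (rule main[OF assms(1), of E1 E2 _ "rank_of indep E2 - a2"]) (use g s in auto)
    show "\<exists>indep2. matroid E indep2 \<and> bases E indep2 =
            {B \<in> bases E indep. card (B \<inter> E2) \<le> rank_of indep E2 - a2}"
    proof (rule main[OF assms(1), of E2 E1 _ "rank_of indep E1 - a1"])
      show "\<forall>X Y. restr indep E2 X \<and> card X \<le> rank_of indep E2 - a2 \<and> restr indep E1 Y \<and> card Y \<le> rank_of indep E1 - a1 \<longrightarrow> indep (X \<union> Y)"
      proof (intro allI impI)
        fix X Y assume h: "restr indep E2 X \<and> card X \<le> rank_of indep E2 - a2 \<and> restr indep E1 Y \<and> card Y \<le> rank_of indep E1 - a1"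
        have "\<forall>X Y. restr indep E1 X \<and> card X \<le> rank_of indep E1 - a1 \<and> restr indep E2 Y \<and> card Y \<le> rank_of indep E2 - a2 \<longrightarrow> indep (X \<union> Y)"
          using g by blast
        hence "indep (Y \<union> X)" using h by blast
        thus "indep (X \<union> Y)" by (simp add: Un_commute)
      qed
    qed (use g s in auto)
  qed
qed

end
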